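(* Let $X$ be a pure $k$-dimensional simplicial complex and $\Delta^{\mathrm{up}}_{k-1}=\Delta^{\mathrm{up}}_{k-1}(X)$. Assume there are reals $\lambda_{\min},\lambda_{\max}$ such that for every $F\in X_{k-2}$, every eigenvalue $\lambda$ of the normalized graph Laplacian $\Delta(\mathrm{lk}\,F)$ other than the smallest one $\lambda_1=0$ (i.e. $\lambda_2,\dots,\lambda_m$, with $m$ the number of vertices of $\mathrm{lk}\,F$) satisfies $\lambda_{\min}\le\lambda\le\lambda_{\max}$. Then for all $f\in C^{k-1}(X;\mathbb R)$ orthogonal to $B^{k-1}(X)$ with respect to $\langle\cdot,\cdot\rangle$, $$(1+k\lambda_{\min}-k)\langle f,f\rangle\le\langle\Delta^{\mathrm{up}}_{k-1}f,f\rangle\le(1+k\lambda_{\max}-k)\langle f,f\rangle.$$ Hence all nontrivial eigenvalues of $\Delta^{\mathrm{up}}_{k-1}$ lie in $[1+k\lambda_{\min}-k,\,1+k\lambda_{\max}-k]$.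
   Context: Complexes have linearly ordered vertex sets; $X_i$ is the set of $i$-faces; $[F:G]$ is the oriented incidence number ($(-1)^j$ if $F\setminus G=\{v_j\}$, $F=\{v_0<\dots<v_i\}$; $0$ if $G\not\subseteq F$). $\deg(F)$ is the number of $k$-faces containing $F$; pure means all maximal faces have dimension $k$. $B^{k-1}(X)=\operatorname{im}\delta_{k-2}\subseteq C^{k-1}(X;\mathbb R)=\mathbb R^{X_{k-1}}$ where $(\delta f)(H)=\sum_G[H:G]f(G)$. $\langle f,g\rangle=\sum_{F\in X_{k-1}}\deg(F)f(F)g(F)$. $A_{k-1}(X)$ has entry $[F:F\cap G][G:F\cap G]$ if $|F\cap G|=k-1$ and $F\cup G\in X_k$, else $0$; $\Delta^{\mathrm{up}}_{k-1}(X)=I-D_{k-1}^{-1}A_{k-1}(X)$, $D_{k-1}$ the diagonal degree matrix; nontrivial eigenvalues are those of its restriction to the $\langle\cdot,\cdot\rangle$-orthogonal complement of $B^{k-1}(X)$. The link $\mathrm{lk}\,F=\{G\in X: F\cup G\in X,\ F\cap G=\emptyset\}$; for $F\in X_{k-2}$ it is a graph (without isolated vertices when $X$ is pure). For a graph $G$ without isolated vertices, $\Delta(G)=I-D^{-1}A$ with $A$ the adjacency matrix and $D$ the diagonal degree matrix. *)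

theory Defs
  imports "Jordan_Normal_Form.Char_Poly"
begin

(* Faces are finite sets of vertices; an i-face has cardinality i+1.
   We index faces by CARDINALITY: faces X c = X_{c-1}. *)
definition simplicial_complex :: "'v set set \<Rightarrow> bool" where
  "simplicial_complex X \<longleftrightarrow> finite X \<and> (\<forall>F\<in>X. finite F) \<and> (\<forall>F\<in>X. \<forall>G. G \<subseteq> F \<longrightarrow> G \<in> X)"

definition faces :: "'v set set \<Rightarrow> nat \<Rightarrow> 'v set set" where
  "faces X c = {F\<in>X. card F = c}"

definition pure_dim :: "'v set set \<Rightarrow> nat \<Rightarrow> bool" where
  "pure_dim X k \<longleftrightarrow> (\<forall>F\<in>X. (\<forall>G\<in>X. F \<subseteq> G \<longrightarrow> G = F) \<longrightarrow> card F = k + 1)"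

definition incidence :: "'v::linorder set \<Rightarrow> 'v set \<Rightarrow> real" where
  "incidence F G = (if G \<subseteq> F \<and> card (F - G) = 1
      then (-1) ^ card {u\<in>F. u < the_elem (F - G)} else 0)"

definition deg :: "'v set set \<Rightarrow> nat \<Rightarrow> 'v set \<Rightarrow> nat" where
  "deg X k F = card {H \<in> faces X (k + 1). F \<subseteq> H}"

definition coboundary :: "'v::linorder set set \<Rightarrow> nat \<Rightarrow> ('v set \<Rightarrow> real) \<Rightarrow> 'v set \<Rightarrow> real" where
  "coboundary X c g H = (\<Sum>G\<in>faces X c. incidence H G * g G)"

definition inner_w :: "'v set set \<Rightarrow> nat \<Rightarrow> ('v set \<Rightarrow> real) \<Rightarrow> ('v set \<Rightarrow> real) \<Rightarrow> real" where
  "inner_w X k f g = (\<Sum>F\<in>faces X k. real (deg X k F) * f F * g F)"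

definition orth_B :: "'v::linorder set set \<Rightarrow> nat \<Rightarrow> ('v set \<Rightarrow> real) \<Rightarrow> bool" where
  "orth_B X k f \<longleftrightarrow> (\<forall>g. inner_w X k f (coboundary X (k - 1) g) = 0)"

definition adj_up :: "'v::linorder set set \<Rightarrow> nat \<Rightarrow> 'v set \<Rightarrow> 'v set \<Rightarrow> real" where
  "adj_up X k F G = (if card (F \<inter> G) = k - 1 \<and> F \<union> G \<in> faces X (k + 1)
      then incidence F (F \<inter> G) * incidence G (F \<inter> G) else 0)"

definition up_laplacian :: "'v::linorder set set \<Rightarrow> nat \<Rightarrow> ('v set \<Rightarrow> real) \<Rightarrow> 'v set \<Rightarrow> real" where
  "up_laplacian X k f F = f F - (1 / real (deg X k F)) * (\<Sum>G\<in>faces X k. adj_up X k F G * f G)"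

definition link :: "'v set set \<Rightarrow> 'v set \<Rightarrow> 'v set set" where
  "link X F = {G\<in>X. F \<union> G \<in> X \<and> F \<inter> G = {}}"

definition link_vertices :: "'v set set \<Rightarrow> 'v set \<Rightarrow> 'v set" where
  "link_vertices X F = {v. {v} \<in> link X F}"

definition link_adj :: "'v set set \<Rightarrow> 'v set \<Rightarrow> 'v \<Rightarrow> 'v \<Rightarrow> bool" where
  "link_adj X F u v \<longleftrightarrow> u \<noteq> v \<and> {u, v} \<in> link X F"

definition link_degree :: "'v set set \<Rightarrow> 'v set \<Rightarrow> 'v \<Rightarrow> nat" where
  "link_degree X F v = card {w \<in> link_vertices X F. link_adj X F v w}"

definition link_laplacian :: "'v::linorder set set \<Rightarrow> 'v set \<Rightarrow> real mat" where
  "link_laplacian X F =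
     (let vs = sorted_list_of_set (link_vertices X F); m = length vs in
      mat m m (\<lambda>(i, j). (if i = j then 1 else 0)
        - (if link_adj X F (vs ! i) (vs ! j) then 1 / real (link_degree X F (vs ! i)) else 0)))"

end

theory Submission
  imports Defs "Jordan_Normal_Form.Schur_Decomposition"
begin

lemma real_sym_eigen:
  fixes A :: "real mat"
  assumes A: "A \<in> carrier_mat n n" and sym: "\<And>i j. i < n \<Longrightarrow> j < n \<Longrightarrow> A $$ (i,j) = A $$ (j,i)"
    and n: "0 < n"
  shows "\<exists>e v. v \<in> carrier_vec n \<and> v \<noteq> 0\<^sub>v n \<and> A *\<^sub>v v = e \<cdot>\<^sub>v v"
proof -
  define Ac where "Ac = map_mat complex_of_real A"
  have Ac: "Ac \<in> carrier_mat n n" using A by (simp add: Ac_def)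
  from char_poly_factorized[OF Ac] obtain as where cp: "char_poly Ac = (\<Prod>a\<leftarrow>as. [:-a,1:])"
    and len: "length as = n" by blast
  define a where "a = hd as"
  have "a \<in> set as" using len n by (cases as) (auto simp: a_def)
  then have "poly (char_poly Ac) a = 0" unfolding cp
    by (auto simp: poly_prod_list prod_list_zero_iff)
  then have "eigenvalue Ac a" using eigenvalue_root_char_poly[OF Ac] by simp
  then obtain v where v: "v \<in> carrier_vec n" "v \<noteq> 0\<^sub>v n" "Ac *\<^sub>v v = a \<cdot>\<^sub>v v"
    unfolding eigenvalue_def eigenvector_def using Ac by auto
  define N where "N = (\<Sum>i<n. cnj (v$i) * v$i)"
  define s where "s = (\<Sum>i<n. cnj (v$i) * (Ac *\<^sub>v v)$i)"
  have s1: "s = a * N" unfolding s_def N_def v(3) using v(1)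
    by (simp add: sum_distrib_left mult.commute mult.left_commute)
  have Av: "(Ac *\<^sub>v v)$i = (\<Sum>j<n. complex_of_real (A $$ (i,j)) * v$j)" if "i < n" for i
    using that A v(1) by (auto simp: Ac_def scalar_prod_def atLeast0LessThan)
  have s_expand: "s = (\<Sum>i<n. \<Sum>j<n. cnj (v$i) * complex_of_real (A $$ (i,j)) * v$j)"
    unfolding s_def by (simp add: Av sum_distrib_left mult.assoc)
  have "cnj s = (\<Sum>i<n. \<Sum>j<n. v$i * complex_of_real (A $$ (i,j)) * cnj (v$j))"
    unfolding s_expand by (simp add: cnj_sum)
  also have "\<dots> = (\<Sum>j<n. \<Sum>i<n. v$i * complex_of_real (A $$ (i,j)) * cnj (v$j))"
    by (rule sum.swap)
  also have "\<dots> = s" unfolding s_expand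
    by (intro sum.cong refl, simp add: sym mult.commute mult.left_commute)
  finally have s2: "cnj s = s" .
  have Nreal: "N = complex_of_real (\<Sum>i<n. (cmod (v$i))^2)"
    unfolding N_def of_real_sum
    by (intro sum.cong refl) (simp only: complex_norm_square mult.commute[of "cnj _"])
  have "\<exists>i<n. v$i \<noteq> 0"
  proof (rule ccontr)
    assume "\<not> ?thesis"
    then have "v = 0\<^sub>v n" using v(1) by (intro eq_vecI) auto
    with v(2) show False by simp
  qed
  then obtain i0 where i0: "i0 < n" "v$i0 \<noteq> 0" by blast
  have "(\<Sum>i<n. (cmod (v$i))^2) > 0"
    by (rule sum_pos2[of _ i0]) (use i0 in auto)
  then have N0: "N \<noteq> 0" unfolding Nreal of_real_eq_0_iff by simp
  have "cnj a * N = a * N"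
    using s1 s2 Nreal by (metis complex_cnj_complex_of_real complex_cnj_mult)
  then have ca: "cnj a = a" using N0 by simp
  define e where "e = Re a"
  have ae: "a = complex_of_real e" unfolding e_def using ca
    by (metis Reals_cnj_iff complex_is_Real_iff of_real_Re)
  have "poly (char_poly Ac) (complex_of_real e) = 0" using \<open>poly (char_poly Ac) a = 0\<close> ae by simp
  also have "char_poly Ac = map_poly complex_of_real (char_poly A)"
    unfolding Ac_def by (rule of_real_hom.char_poly_hom[OF A])
  finally have "poly (char_poly A) e = 0" by simp
  then have "eigenvalue A e" using eigenvalue_root_char_poly[OF A] by simp
  then show ?thesis unfolding eigenvalue_def eigenvector_def using A by auto
qed

lemma real_vec_cscalar: "(v::real vec) \<bullet>c w = v \<bullet> w"
  by (simp add: scalar_prod_def)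

lemma spectral_sym:
  fixes A :: "real mat"
  assumes "A \<in> carrier_mat n n" and "\<And>i j. i < n \<Longrightarrow> j < n \<Longrightarrow> A $$ (i,j) = A $$ (j,i)"
  shows "\<exists>P es. P \<in> carrier_mat n n \<and> length es = n \<and> transpose_mat P * P = 1\<^sub>m n
     \<and> transpose_mat P * A * P = mat n n (\<lambda>(i,j). if i = j then es!i else 0)"
  using assms
proof (induction n arbitrary: A)
  case 0
  show ?case by (intro exI[of _ "1\<^sub>m 0"] exI[of _ "[]"]) (auto intro!: eq_matI)
next
  case (Suc m)
  define n where "n = Suc m"
  have A: "A \<in> carrier_mat n n" using Suc.prems unfolding n_def by simp
  have sym: "\<And>i j. i < n \<Longrightarrow> j < n \<Longrightarrow> A $$ (i,j) = A $$ (j,i)" using Suc.prems n_def by auto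
  obtain e v where v: "v \<in> carrier_vec n" "v \<noteq> 0\<^sub>v n" "A *\<^sub>v v = e \<cdot>\<^sub>v v"
    using real_sym_eigen[OF A sym] n_def by auto
  have vv: "v \<bullet> v > 0"
  proof -
    have "\<exists>i<n. v$i \<noteq> 0"
    proof (rule ccontr)
      assume "\<not> ?thesis"
      then have "v = 0\<^sub>v n" using v(1) by (intro eq_vecI) auto
      with v(2) show False by simp
    qed
    then obtain i0 where i0: "i0 < n" "v$i0 \<noteq> 0" by blast
    have "v \<bullet> v = (\<Sum>i\<in>{0..<n}. (v$i)^2)" using v(1) by (simp add: scalar_prod_def power2_eq_square)
    also have "\<dots> > 0" by (rule sum_pos2[of _ i0]) (use i0 in auto)
    finally show ?thesis .
  qed
  define v0 where "v0 = (1 / sqrt (v \<bullet> v)) \<cdot>\<^sub>v v"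
  have v0c: "v0 \<in> carrier_vec n" using v(1) by (simp add: v0_def)
  have v0v0: "v0 \<bullet> v0 = 1" unfolding v0_def using v(1) vv
    by (simp add: smult_scalar_prod_distrib scalar_prod_smult_distrib)
  have v0nz: "v0 \<noteq> 0\<^sub>v n" using v0v0 v0c by auto
  have Av0: "A *\<^sub>v v0 = e \<cdot>\<^sub>v v0" unfolding v0_def using A v
    by (simp add: mult_mat_vec smult_smult_assoc mult.commute)
  interpret cof_vec_space n "TYPE(real)" .
  define b where "b = basis_completion v0"
  from basis_completion[OF v0c v0nz, folded b_def]
  have indep: "\<not> lin_dep (set b)" and bc: "set b \<subseteq> carrier_vec n" and hdb: "hd b = v0"
    and len_b: "length b = n" and dist_b: "distinct b" by auto
  from hdb len_b n_def obtain vs where bv: "b = v0 # vs" by (cases b, auto)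
  define ws where "ws = gram_schmidt n b"
  from gram_schmidt_result[OF bc dist_b indep ws_def]
  have wsorth: "corthogonal ws" and wsc: "set ws \<subseteq> carrier_vec n" and wslen: "length ws = n" 
    by (auto simp: len_b)
  have hdws: "hd ws = v0" unfolding ws_def bv using gram_schmidt_hd[OF v0c] .
  define ws2 where "ws2 = map (\<lambda>w. (1 / sqrt (w \<bullet> w)) \<cdot>\<^sub>v w) ws"
  have ws2len: "length ws2 = n" using wslen by (simp add: ws2_def)
  have ws2c: "ws2 ! i \<in> carrier_vec n" if "i < n" for i
    using that wsc wslen by (auto simp: ws2_def)
  have wsc': "ws ! i \<in> carrier_vec n" if "i < n" for i using that wsc wslen by auto
  have wspos: "ws ! i \<bullet> ws ! i > 0" if "i < n" for i
  proof -
    have "ws ! i \<bullet> ws ! i \<noteq> 0" using corthogonalD[OF wsorth, of i i] that wslen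
      by (simp add: real_vec_cscalar)
    moreover have "ws ! i \<bullet> ws ! i \<ge> 0" using wsc'[OF that]
      by (simp add: scalar_prod_def sum_nonneg)
    ultimately show ?thesis by simp
  qed
  have ws2orth: "ws2 ! i \<bullet> ws2 ! j = (if i = j then 1 else 0)" if "i < n" "j < n" for i j
  proof -
    have "ws2 ! i \<bullet> ws2 ! j = (1 / sqrt (ws!i \<bullet> ws!i)) * (1 / sqrt (ws!j \<bullet> ws!j)) * (ws ! i \<bullet> ws ! j)"
      using that wslen wsc'[OF that(1)] wsc'[OF that(2)]
      by (simp add: ws2_def smult_scalar_prod_distrib scalar_prod_smult_distrib)
    moreover have "i \<noteq> j \<Longrightarrow> ws ! i \<bullet> ws ! j = 0"
      using corthogonalD[OF wsorth, of i j] that wslen by (simp add: real_vec_cscalar)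
    ultimately show ?thesis using wspos[OF that(1)] by (auto simp: real_sqrt_mult[symmetric])
  qed
  have ws20: "ws2 ! 0 = v0"
  proof -
    have "ws ! 0 = v0" using hdws wslen n_def by (cases ws) auto
    then show ?thesis using wslen n_def v0v0 by (simp add: ws2_def)
  qed
  define W where "W = mat_of_cols n ws2"
  have W: "W \<in> carrier_mat n n" unfolding W_def using ws2len mat_of_cols_carrier(1)[of n ws2] by simp
  have colW: "col W j = ws2 ! j" if "j < n" for j
    unfolding W_def using that ws2len ws2c by simp
  have WtW: "transpose_mat W * W = 1\<^sub>m n"
    by (rule eq_matI) (use W in \<open>auto simp: colW ws2orth\<close>)
  define A' where "A' = transpose_mat W * A * W"
  have A'c: "A' \<in> carrier_mat n n" unfolding A'_def using A W by simp
  have A'ij: "A' $$ (i,j) = ws2 ! i \<bullet> (A *\<^sub>v ws2 ! j)" if "i < n" "j < n" for i j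
  proof -
    have "A' $$ (i,j) = (transpose_mat W * (A * W)) $$ (i,j)"
      unfolding A'_def using A W by simp
    also have "\<dots> = col W i \<bullet> col (A * W) j" using that A W by simp
    also have "col (A * W) j = A *\<^sub>v col W j" using that A W by (intro col_mult2) auto
    finally show ?thesis using that by (simp add: colW)
  qed
  have AT: "transpose_mat A = A" using A sym by (intro eq_matI) auto
  have A'T: "transpose_mat A' = A'"
  proof -
    have "transpose_mat A' = transpose_mat W * transpose_mat (transpose_mat W * A)"
      unfolding A'_def using A W by (subst transpose_mult[of _ n n]) auto
    also have "transpose_mat (transpose_mat W * A) = transpose_mat A * W"
      using A W by (subst transpose_mult[of _ n n]) auto
    also have "transpose_mat W * (transpose_mat A * W) = A'" unfolding A'_def AT using A W by simp
    finally show ?thesis .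
  qed
  have A'sym: "A' $$ (i,j) = A' $$ (j,i)" if "i < n" "j < n" for i j
    using that A'c arg_cong[OF A'T, of "\<lambda>M. M $$ (j,i)"] by simp
  have A'0: "A' $$ (i,0) = (if i = 0 then e else 0)" if "i < n" for i
  proof -
    have "A *\<^sub>v ws2!0 = e \<cdot>\<^sub>v ws2!0" using ws20 Av0 by simp
    then have "A' $$ (i,0) = e * (ws2 ! i \<bullet> ws2 ! 0)"
      using that n_def ws2c[of 0] ws2c[OF that] A'ij[of i 0] by (simp add: scalar_prod_smult_distrib)
    then show ?thesis using ws2orth[of i 0] that n_def by simp
  qed
  define A3 where "A3 = mat m m (\<lambda>(i,j). A' $$ (Suc i, Suc j))"
  have A3c: "A3 \<in> carrier_mat m m" unfolding A3_def by simp
  have A3sym: "\<And>i j. i < m \<Longrightarrow> j < m \<Longrightarrow> A3 $$ (i,j) = A3 $$ (j,i)"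
    unfolding A3_def using A'sym n_def by auto
  from Suc.IH[OF A3c A3sym] obtain P3 es3 where P3: "P3 \<in> carrier_mat m m" and es3: "length es3 = m"
    and P3o: "transpose_mat P3 * P3 = 1\<^sub>m m"
    and P3d: "transpose_mat P3 * A3 * P3 = mat m m (\<lambda>(i,j). if i = j then es3!i else 0)" by blast
  define Pb where "Pb = four_block_mat (1\<^sub>m 1) (0\<^sub>m 1 m) (0\<^sub>m m 1) P3"
  have Pbc: "Pb \<in> carrier_mat n n" unfolding Pb_def n_def using P3 four_block_carrier_mat[of "1\<^sub>m 1" 1 1 P3 m m] by simp
  have PbT: "transpose_mat Pb = four_block_mat (1\<^sub>m 1) (0\<^sub>m 1 m) (0\<^sub>m m 1) (transpose_mat P3)"
    unfolding Pb_def using P3 by (subst transpose_four_block_mat) auto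
  define E where "E = mat 1 1 (\<lambda>_. e)"
  have A'blk: "A' = four_block_mat E (0\<^sub>m 1 m) (0\<^sub>m m 1) A3"
  proof (rule eq_matI)
    fix i j assume ij: "i < dim_row (four_block_mat E (0\<^sub>m 1 m) (0\<^sub>m m 1) A3)"
      "j < dim_col (four_block_mat E (0\<^sub>m 1 m) (0\<^sub>m m 1) A3)"
    then have i: "i < n" and j: "j < n" using A3c n_def by (auto simp: E_def)
    show "A' $$ (i, j) = four_block_mat E (0\<^sub>m 1 m) (0\<^sub>m m 1) A3 $$ (i, j)"
      using ij i j A3c A'0[OF i] A'0[OF j] A'sym[OF i j] 
      by (cases i; cases j) (auto simp: E_def A3_def)
  qed (use A'c A3c n_def in \<open>auto simp: E_def\<close>)
  have Ec: "E \<in> carrier_mat 1 1" by (simp add: E_def)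
  have blk1: "transpose_mat Pb * Pb = 1\<^sub>m n"
    unfolding PbT unfolding Pb_def using P3
    by (subst mult_four_block_mat[where ?nr1.0=1 and ?n1.0=1 and ?n2.0=m and ?nr2.0=m and ?nc1.0=1 and ?nc2.0=m]) (auto simp: P3o n_def)
  have blk2: "transpose_mat Pb * A' * Pb = four_block_mat E (0\<^sub>m 1 m) (0\<^sub>m m 1) (transpose_mat P3 * A3 * P3)"
    unfolding PbT A'blk unfolding Pb_def using P3 A3c Ec
    apply (subst mult_four_block_mat[where ?nr1.0=1 and ?n1.0=1 and ?n2.0=m and ?nr2.0=m and ?nc1.0=1 and ?nc2.0=m], auto)
    apply (subst mult_four_block_mat[where ?nr1.0=1 and ?n1.0=1 and ?n2.0=m and ?nr2.0=m and ?nc1.0=1 and ?nc2.0=m], auto)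
    done
  define P where "P = W * Pb"
  have Pc: "P \<in> carrier_mat n n" unfolding P_def using W Pbc by simp
  have PT: "transpose_mat P = transpose_mat Pb * transpose_mat W"
    unfolding P_def using W Pbc by (simp add: transpose_mult[of _ n n])
  have "transpose_mat P * P = transpose_mat Pb * (transpose_mat W * W) * Pb"
    unfolding PT unfolding P_def using W Pbc by (simp add: assoc_mult_mat[of _ n n _ n _ n])
  also have "\<dots> = 1\<^sub>m n" using blk1 Pbc by (simp add: WtW)
  finally have Po: "transpose_mat P * P = 1\<^sub>m n" .
  have "transpose_mat P * A * P = transpose_mat Pb * A' * Pb"
    unfolding PT unfolding P_def A'_def using W Pbc A by (simp add: assoc_mult_mat[of _ n n _ n _ n])
  also have "\<dots> = mat n n (\<lambda>(i,j). if i = j then (e # es3)!i else 0)"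
    unfolding blk2 P3d 
    by (rule eq_matI) (auto simp: E_def n_def nth_Cons')
  finally show ?case using Pc Po es3 n_def by (intro exI[of _ P] exI[of _ "e # es3"]) auto
qed

definition dmat :: "nat \<Rightarrow> (nat \<Rightarrow> 'a::zero) \<Rightarrow> 'a mat" where
  "dmat n f = mat n n (\<lambda>(i,j). if i = j then f i else 0)"

lemma dmat_carrier[simp]: "dmat n f \<in> carrier_mat n n" by (simp add: dmat_def)

lemma dmat_mult_left:
  fixes M :: "'a::comm_semiring_1 mat"
  assumes "M \<in> carrier_mat n k"
  shows "dmat n f * M = mat n k (\<lambda>(i,j). f i * M $$ (i,j))"
proof (rule eq_matI)
  fix i j assume "i < dim_row (mat n k (\<lambda>(i,j). f i * M $$ (i,j)))" "j < dim_col (mat n k (\<lambda>(i,j). f i * M $$ (i,j)))"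
  then have ij: "i < n" "j < k" by auto
  have "(dmat n f * M) $$ (i,j) = (\<Sum>l\<in>{0..<n}. (if i = l then f i else 0) * M $$ (l,j))"
    using ij assms by (simp add: dmat_def scalar_prod_def)
  also have "\<dots> = f i * M $$ (i,j)" using ij
    by (simp add: if_distrib[of "\<lambda>x. x * _"] sum.delta cong: if_cong)
  finally show "(dmat n f * M) $$ (i,j) = mat n k (\<lambda>(i,j). f i * M $$ (i,j)) $$ (i,j)" using ij by simp
qed (use assms in \<open>auto simp: dmat_def\<close>)

lemma dmat_mult_right:
  fixes M :: "'a::comm_semiring_1 mat"
  assumes "M \<in> carrier_mat k n"
  shows "M * dmat n f = mat k n (\<lambda>(i,j). M $$ (i,j) * f j)"
proof (rule eq_matI)
  fix i j assume "i < dim_row (mat k n (\<lambda>(i,j). M $$ (i,j) * f j))" "j < dim_col (mat k n (\<lambda>(i,j). M $$ (i,j) * f j))"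
  then have ij: "i < k" "j < n" by auto
  have "(M * dmat n f) $$ (i,j) = (\<Sum>l\<in>{0..<n}. M $$ (i,l) * (if l = j then f l else 0))"
    using ij assms by (simp add: dmat_def scalar_prod_def)
  also have "\<dots> = M $$ (i,j) * f j" using ij
    by (simp add: if_distrib[of "\<lambda>x. _ * x"] sum.delta' cong: if_cong)
  finally show "(M * dmat n f) $$ (i,j) = mat k n (\<lambda>(i,j). M $$ (i,j) * f j) $$ (i,j)" using ij by simp
qed (use assms in \<open>auto simp: dmat_def\<close>)

lemma mv_index: "A \<in> carrier_mat n k \<Longrightarrow> v \<in> carrier_vec k \<Longrightarrow> i < n \<Longrightarrow>
   (A *\<^sub>v v) $ i = (\<Sum>j<k. A $$ (i,j) * v $ j)"
  by (simp add: scalar_prod_def atLeast0LessThan)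

lemma sp_sum: "v \<in> carrier_vec n \<Longrightarrow> w \<in> carrier_vec n \<Longrightarrow> v \<bullet> w = (\<Sum>i<n. v $ i * w $ i)"
  by (simp add: scalar_prod_def atLeast0LessThan)

lemma graph_bound:
  fixes m :: nat and a :: "nat \<Rightarrow> nat \<Rightarrow> real" and d x :: "nat \<Rightarrow> real" and lmin lmax :: real
  assumes asym: "\<And>i j. i < m \<Longrightarrow> j < m \<Longrightarrow> a i j = a j i"
    and dpos: "\<And>i. i < m \<Longrightarrow> d i > 0"
    and drow: "\<And>i. i < m \<Longrightarrow> d i = (\<Sum>j<m. a i j)"
    and hyp: "\<forall>\<mu>s. char_poly (mat m m (\<lambda>(i,j). (if i = j then 1 else 0) - a i j / d i))
                 = [:0,1:] * (\<Prod>\<mu>\<leftarrow>\<mu>s. [:-\<mu>,1:]) \<longrightarrow> (\<forall>\<mu>\<in>set \<mu>s. lmin \<le> \<mu> \<and> \<mu> \<le> lmax)"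
    and x0: "(\<Sum>i<m. d i * x i) = 0"
  shows "lmin * (\<Sum>i<m. d i * (x i)^2) \<le> (\<Sum>i<m. d i * (x i)^2) - (\<Sum>i<m. \<Sum>j<m. a i j * x i * x j)
       \<and> (\<Sum>i<m. d i * (x i)^2) - (\<Sum>i<m. \<Sum>j<m. a i j * x i * x j) \<le> lmax * (\<Sum>i<m. d i * (x i)^2)"
proof (cases "m = 0")
  case True then show ?thesis by simp
next
  case False
  then have m0: "0 < m" by simp
  have dne: "\<And>j. j < m \<Longrightarrow> d j \<noteq> 0" using dpos by force
  have sdpos: "\<And>j. j < m \<Longrightarrow> sqrt (d j) > 0" using dpos by simp
  have dabs: "\<And>j. j < m \<Longrightarrow> \<bar>d j\<bar> = d j" using dpos by force
  define L where "L = mat m m (\<lambda>(i,j). (if i = j then 1 else 0) - a i j / d i)"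
  define S where "S = mat m m (\<lambda>(i,j). (if i = j then 1 else 0) - a i j / (sqrt (d i) * sqrt (d j)))"
  have Sc: "S \<in> carrier_mat m m" by (simp add: S_def)
  have Lc: "L \<in> carrier_mat m m" by (simp add: L_def)
  have Ssym: "S $$ (i,j) = S $$ (j,i)" if "i < m" "j < m" for i j
    using that asym by (simp add: S_def mult.commute)
  obtain P es where Pc: "P \<in> carrier_mat m m" and les: "length es = m"
    and PtP: "transpose_mat P * P = 1\<^sub>m m"
    and PSP: "transpose_mat P * S * P = mat m m (\<lambda>(i,j). if i = j then es!i else 0)"
    using spectral_sym[OF Sc Ssym] by blast
  define Dm where "Dm = mat m m (\<lambda>(i,j). if i = j then es!i else 0)"
  have Dmc: "Dm \<in> carrier_mat m m" by (simp add: Dm_def)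
  have PPt: "P * transpose_mat P = 1\<^sub>m m"
    using mat_mult_left_right_inverse[OF _ Pc PtP] Pc by simp
  have S_eq: "S = P * Dm * transpose_mat P"
  proof -
    have "P * Dm * transpose_mat P = (P * transpose_mat P) * S * (P * transpose_mat P)"
      unfolding Dm_def PSP[symmetric] using Pc Sc by (simp add: assoc_mult_mat[of _ m m _ m _ m])
    also have "\<dots> = S" using PPt Sc by simp
    finally show ?thesis by simp
  qed
  have "similar_mat S Dm" unfolding similar_mat_def
    by (rule exI[of _ P], rule exI[of _ "transpose_mat P"], rule similar_mat_witI[of _ _ m])
      (use PPt PtP S_eq Pc Sc Dmc in auto)
  moreover have "diag_mat Dm = es" by (rule nth_equalityI) (auto simp: diag_mat_def Dm_def les)
  moreover have "upper_triangular Dm" by (auto simp: Dm_def upper_triangular_def)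
  ultimately have cpS: "char_poly S = (\<Prod>e\<leftarrow>es. [:-e,1:])"
    using char_poly_upper_triangular[OF Dmc] char_poly_similar by metis
  define R where "R = dmat m (\<lambda>i. 1 / sqrt (d i))"
  define R' where "R' = dmat m (\<lambda>i. sqrt (d i))"
  have RR'1: "R * R' = 1\<^sub>m m"
    unfolding R_def R'_def by (subst dmat_mult_left[OF dmat_carrier], use dpos in \<open>force simp: dmat_def intro!: eq_matI\<close>)
  have RR'2: "R' * R = 1\<^sub>m m"
    unfolding R_def R'_def by (subst dmat_mult_left[OF dmat_carrier], use dpos in \<open>force simp: dmat_def intro!: eq_matI\<close>)
  note RR' = RR'1 RR'2
  have L_eq: "L = R * S * R'"
    unfolding R_def R'_def
    apply (subst dmat_mult_left[OF Sc])
    apply (subst dmat_mult_right[of _ m])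
     apply simp
    apply (rule eq_matI)
      apply (simp_all add: L_def S_def)
    using dpos by (force simp: field_simps dest: dpos)
  have "similar_mat L S" unfolding similar_mat_def
    by (rule exI[of _ R], rule exI[of _ R'], rule similar_mat_witI[of _ _ m])
      (use RR' L_eq Lc Sc in \<open>auto simp: R_def R'_def\<close>)
  then have cpL: "char_poly L = (\<Prod>e\<leftarrow>es. [:-e,1:])" using cpS char_poly_similar by metis
  define one where "one = vec m (\<lambda>_. 1::real)"
  have "L *\<^sub>v one = 0 \<cdot>\<^sub>v one"
  proof (rule eq_vecI)
    fix i assume "i < dim_vec (0 \<cdot>\<^sub>v one)"
    then have i: "i < m" by (simp add: one_def)
    have "(L *\<^sub>v one) $ i = (\<Sum>j<m. ((if i = j then 1 else 0) - a i j / d i))"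
      using i Lc by (simp add: one_def L_def scalar_prod_def atLeast0LessThan)
    also have "\<dots> = 1 - (\<Sum>j<m. a i j) / d i" using i
      by (simp add: sum_subtractf sum_divide_distrib)
    also have "\<dots> = 0" using drow[OF i] dpos[OF i] by simp
    finally show "(L *\<^sub>v one) $ i = (0 \<cdot>\<^sub>v one) $ i" using i by (simp add: one_def)
  qed (simp add: one_def L_def)
  moreover have "one \<noteq> 0\<^sub>v m" using m0 
    by (metis dim_vec index_vec index_zero_vec(1) one_def zero_neq_one)
  ultimately have "eigenvalue L 0" unfolding eigenvalue_def eigenvector_def
    using Lc by (intro exI[of _ one]) (auto simp: one_def)
  then have "poly (char_poly L) 0 = 0" using eigenvalue_root_char_poly[OF Lc] by simp
  then have "0 \<in> set es" unfolding cpL by (auto simp: poly_prod_list prod_list_zero_iff)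
  then obtain p where p: "p < m" "es ! p = 0" using les by (auto simp: in_set_conv_nth)
  define \<mu>s where "\<mu>s = take p es @ drop (Suc p) es"
  have "(\<Prod>e\<leftarrow>es. [:-e,1:]) = (\<Prod>e\<leftarrow>take p es @ es!p # drop (Suc p) es. [:-e,1:])"
    using id_take_nth_drop[of p es] p les by simp
  also have "\<dots> = [:0,1:] * (\<Prod>\<mu>\<leftarrow>\<mu>s. [:-\<mu>,1:])"
    using p by (simp add: \<mu>s_def mult.left_commute)
  finally have "char_poly L = [:0,1:] * (\<Prod>\<mu>\<leftarrow>\<mu>s. [:-\<mu>,1:])" using cpL by simp
  then have range: "\<forall>\<mu>\<in>set \<mu>s. lmin \<le> \<mu> \<and> \<mu> \<le> lmax" using hyp unfolding L_def by blast
  have esr: "lmin \<le> es!j \<and> es!j \<le> lmax" if "j < m" "j \<noteq> p" for j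
  proof -
    have "es ! j \<in> set \<mu>s"
    proof (cases "j < p")
      case True then show ?thesis using that les by (auto simp: \<mu>s_def in_set_conv_nth intro!: exI[of _ j])
    next
      case False
      then have "j - Suc p < length (drop (Suc p) es)" "drop (Suc p) es ! (j - Suc p) = es ! j"
        using that les by auto
      then show ?thesis unfolding \<mu>s_def by (metis UnCI nth_mem set_append)
    qed
    then show ?thesis using range by blast
  qed
  define y where "y = vec m (\<lambda>i. sqrt (d i) * x i)"
  define u where "u = vec m (\<lambda>i. sqrt (d i))"
  have yc: "y \<in> carrier_vec m" and uc: "u \<in> carrier_vec m" by (auto simp: y_def u_def)
  have dx2: "sqrt (d i) * x i * (sqrt (d i) * x i) = d i * (x i)^2" if "i < m" for i
    using dpos[OF that] by (simp add: power2_eq_square mult_ac)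
  have yy: "y \<bullet> y = (\<Sum>i<m. d i * (x i)^2)"
    unfolding sp_sum[OF yc yc] by (intro sum.cong refl) (simp add: y_def dx2)
  have yu: "y \<bullet> u = 0"
    unfolding sp_sum[OF yc uc] x0[symmetric] by (intro sum.cong refl) (use dpos in \<open>force simp: y_def u_def mult_ac dest: dpos\<close>)
  have Sy: "(S *\<^sub>v y) $ i = sqrt (d i) * x i - (\<Sum>j<m. a i j * x j) / sqrt (d i)" if i: "i < m" for i
  proof -
    have "(S *\<^sub>v y) $ i = (\<Sum>j<m. ((if i = j then 1 else 0) - a i j / (sqrt (d i) * sqrt (d j))) * (sqrt (d j) * x j))"
      using i by (simp add: S_def y_def scalar_prod_def atLeast0LessThan)
    also have "\<dots> = (\<Sum>j<m. (if i = j then sqrt (d j) * x j else 0) - a i j * x j / sqrt (d i))"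
      by (intro sum.cong refl) (auto simp: field_simps dne sdpos dpos dabs)
    also have "\<dots> = sqrt (d i) * x i - (\<Sum>j<m. a i j * x j) / sqrt (d i)"
      using i by (simp add: sum_subtractf sum_divide_distrib)
    finally show ?thesis .
  qed
  have ySy: "y \<bullet> (S *\<^sub>v y) = (\<Sum>i<m. d i * (x i)^2) - (\<Sum>i<m. \<Sum>j<m. a i j * x i * x j)"
  proof -
    have "y \<bullet> (S *\<^sub>v y) = (\<Sum>i<m. sqrt (d i) * x i * (sqrt (d i) * x i - (\<Sum>j<m. a i j * x j) / sqrt (d i)))"
      unfolding sp_sum[OF yc mult_mat_vec_carrier[OF Sc yc]]
      by (intro sum.cong refl) (simp add: Sy, simp add: y_def)
    also have "\<dots> = (\<Sum>i<m. d i * (x i)^2 - (\<Sum>j<m. a i j * x i * x j))"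
      by (intro sum.cong refl) (auto simp: field_simps dne sdpos dpos dabs sum_distrib_left power2_eq_square)
    finally show ?thesis by (simp add: sum_subtractf)
  qed
  have Su: "S *\<^sub>v u = 0\<^sub>v m"
  proof (rule eq_vecI)
    fix i assume "i < dim_vec (0\<^sub>v m :: real vec)"
    then have i: "i < m" by simp
    have "(S *\<^sub>v u) $ i = (\<Sum>j<m. ((if i = j then 1 else 0) - a i j / (sqrt (d i) * sqrt (d j))) * sqrt (d j))"
      using i by (simp add: S_def u_def scalar_prod_def atLeast0LessThan)
    also have "\<dots> = (\<Sum>j<m. (if i = j then sqrt (d j) else 0) - a i j / sqrt (d i))"
      by (intro sum.cong refl) (auto simp: field_simps dne sdpos dpos dabs)
    also have "\<dots> = sqrt (d i) - (\<Sum>j<m. a i j) / sqrt (d i)"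
      using i by (simp add: sum_subtractf sum_divide_distrib)
    also have "\<dots> = 0" using drow[OF i] dpos[OF i] by (simp add: real_div_sqrt)
    finally show "(S *\<^sub>v u) $ i = 0\<^sub>v m $ i" using i by simp
  qed (use Sc in simp)
  define c where "c = transpose_mat P *\<^sub>v y"
  define cu where "cu = transpose_mat P *\<^sub>v u"
  have cc: "c \<in> carrier_vec m" "cu \<in> carrier_vec m" using Pc yc uc unfolding c_def cu_def by (auto intro!: mult_mat_vec_carrier)
  have yPc: "y = P *\<^sub>v c" unfolding c_def using Pc yc PPt
    by (simp add: assoc_mult_mat_vec[symmetric, of _ m m _ m])
  have uPc: "u = P *\<^sub>v cu" unfolding cu_def using Pc uc PPt
    by (simp add: assoc_mult_mat_vec[symmetric, of _ m m _ m])
  have gen: "(P *\<^sub>v v) \<bullet> (M *\<^sub>v (P *\<^sub>v w)) = v \<bullet> ((transpose_mat P * M * P) *\<^sub>v w)"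
    if "v \<in> carrier_vec m" "w \<in> carrier_vec m" "M \<in> carrier_mat m m" for v w M
  proof -
    have "(P *\<^sub>v v) \<bullet> (M *\<^sub>v (P *\<^sub>v w)) = (M *\<^sub>v (P *\<^sub>v w)) \<bullet> (P *\<^sub>v v)"
      using that Pc by (simp add: comm_scalar_prod[of _ m])
    also have "\<dots> = (transpose_mat P *\<^sub>v (M *\<^sub>v (P *\<^sub>v w))) \<bullet> v"
      using that Pc by (simp add: transpose_vec_mult_scalar[of _ m m])
    also have "\<dots> = v \<bullet> ((transpose_mat P * M * P) *\<^sub>v w)"
      using that Pc by (simp add: comm_scalar_prod[of _ m] assoc_mult_mat_vec[of _ m m _ m])
    finally show ?thesis .
  qed
  have I1: "(1\<^sub>m m :: real mat) \<in> carrier_mat m m" by simp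
  have cc_eq: "y \<bullet> y = c \<bullet> c"
    using gen[OF cc(1) cc(1) I1] Pc cc yPc PtP by simp
  have cy_eq: "y \<bullet> (S *\<^sub>v y) = c \<bullet> (Dm *\<^sub>v c)"
    using gen[OF cc(1) cc(1) Sc] yPc PSP by (simp add: Dm_def)
  have cu_eq: "y \<bullet> u = c \<bullet> cu"
    using gen[OF cc(1) cc(2) I1] Pc cc yPc uPc PtP by simp
  have Dcu: "Dm *\<^sub>v cu = 0\<^sub>v m"
  proof -
    have "Dm *\<^sub>v cu = transpose_mat P *\<^sub>v (S *\<^sub>v (P *\<^sub>v cu))"
      unfolding Dm_def PSP[symmetric] using Pc Sc cc by (simp add: assoc_mult_mat_vec[of _ m m _ m])
    also have "\<dots> = 0\<^sub>v m" unfolding uPc[symmetric] Su using Pc by (intro eq_vecI) auto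
    finally show ?thesis .
  qed
  have Dv: "(Dm *\<^sub>v v) $ j = es ! j * v $ j" if "v \<in> carrier_vec m" "j < m" for v j
  proof -
    have "(Dm *\<^sub>v v) $ j = (\<Sum>l<m. (if j = l then es ! j else 0) * v $ l)"
      using that by (simp add: Dm_def scalar_prod_def atLeast0LessThan)
    also have "\<dots> = es ! j * v $ j" using that(2)
      by (simp add: if_distrib[of "\<lambda>x. x * _"] sum.delta cong: if_cong)
    finally show ?thesis .
  qed
  have escu: "es ! j * cu $ j = 0" if "j < m" for j
    using Dv[OF cc(2) that] Dcu that by simp
  have cDc: "c \<bullet> (Dm *\<^sub>v c) = (\<Sum>j<m. es ! j * (c $ j)^2)"
    unfolding sp_sum[OF cc(1) mult_mat_vec_carrier[OF Dmc cc(1)]]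
    by (intro sum.cong refl) (simp add: Dv[OF cc(1)] power2_eq_square)
  have ccs: "c \<bullet> c = (\<Sum>j<m. (c $ j)^2)"
    unfolding sp_sum[OF cc(1) cc(1)] by (simp add: power2_eq_square)
  have each: "lmin * (c $ j)^2 \<le> es ! j * (c $ j)^2 \<and> es ! j * (c $ j)^2 \<le> lmax * (c $ j)^2"
    if j: "j < m" for j
  proof (cases "j = p")
    case False
    then show ?thesis using esr[OF j False] by (auto intro: mult_right_mono)
  next
    case True
    show ?thesis
    proof (cases "lmin \<le> 0 \<and> 0 \<le> lmax")
      case True
      then show ?thesis using p \<open>j = p\<close> by (auto intro: mult_right_mono mult_nonneg_nonneg mult_nonpos_nonneg)
    next
      case False
      have cuz: "cu $ l = 0" if "l < m" "l \<noteq> p" for l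
      proof -
        have "es ! l \<noteq> 0" using esr[OF that] False by auto
        then show ?thesis using escu[OF that(1)] by simp
      qed
      have "c \<bullet> cu = (\<Sum>l<m. c $ l * cu $ l)" using sp_sum[OF cc(1) cc(2)] .
      also have "\<dots> = (\<Sum>l<m. if l = p then c $ p * cu $ p else 0)"
        by (intro sum.cong refl) (auto simp: cuz)
      also have "\<dots> = c $ p * cu $ p" using p by simp
      finally have "c $ p * cu $ p = 0" using cu_eq yu by simp
      moreover have "cu $ p \<noteq> 0"
      proof
        assume "cu $ p = 0"
        then have "cu = 0\<^sub>v m" using cuz cc(2) by (intro eq_vecI; cases "i = p"; auto)
        then have "u = 0\<^sub>v m" using uPc Pc by (auto intro!: eq_vecI)
        then have "u $ 0 = 0" using m0 by simp
        then show False using sdpos[OF m0] by (simp add: u_def m0)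
      qed
      ultimately have "c $ p = 0" by simp
      then show ?thesis using \<open>j = p\<close> by simp
    qed
  qed
  have "lmin * (\<Sum>j<m. (c $ j)^2) \<le> (\<Sum>j<m. es ! j * (c $ j)^2)"
    unfolding sum_distrib_left by (rule sum_mono) (use each in auto)
  moreover have "(\<Sum>j<m. es ! j * (c $ j)^2) \<le> lmax * (\<Sum>j<m. (c $ j)^2)"
    unfolding sum_distrib_left by (rule sum_mono) (use each in auto)
  ultimately show ?thesis
    using yy ySy cc_eq cy_eq ccs cDc by simp
qed

lemma sum_sorted:
  assumes "finite V"
  shows "(\<Sum>v\<in>V. g v) = (\<Sum>j<length (sorted_list_of_set V). g (sorted_list_of_set V ! j))"
proof -
  let ?vs = "sorted_list_of_set V"
  have im: "(\<lambda>j. ?vs!j) ` {..<length ?vs} = set ?vs" by (auto simp: set_conv_nth)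
  have "bij_betw (\<lambda>j. ?vs ! j) {..<length ?vs} V"
    unfolding bij_betw_def using assms im by (auto intro!: inj_on_nth)
  then show ?thesis by (simp add: sum.reindex_bij_betw[symmetric])
qed

context
  fixes X :: "'v::linorder set set" and k :: nat
  assumes sc: "simplicial_complex X" and k1: "k \<ge> 1" and pure: "pure_dim X k"
begin

lemma fin_X: "finite X" using sc by (simp add: simplicial_complex_def)
lemma fin_face: "F \<in> X \<Longrightarrow> finite F" using sc by (simp add: simplicial_complex_def)
lemma sub_face: "F \<in> X \<Longrightarrow> G \<subseteq> F \<Longrightarrow> G \<in> X" using sc by (simp add: simplicial_complex_def)

lemma maximal_above:
  assumes "F \<in> X" shows "\<exists>H\<in>X. F \<subseteq> H \<and> card H = k + 1"
proof -
  have fin: "finite {H\<in>X. F \<subseteq> H}" using fin_X by simp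
  have ne: "{H\<in>X. F \<subseteq> H} \<noteq> {}" using assms by auto
  obtain H where H: "H \<in> {H\<in>X. F \<subseteq> H}" and mx: "\<forall>G\<in>{H\<in>X. F \<subseteq> H}. H \<le> G \<longrightarrow> H = G"
    using finite_has_maximal[OF fin ne] by blast
  have "\<forall>G\<in>X. H \<subseteq> G \<longrightarrow> G = H" using mx H by auto
  then have "card H = k + 1" using pure H unfolding pure_dim_def by auto
  then show ?thesis using H by auto
qed

lemma deg_pos: assumes "F \<in> faces X k" shows "deg X k F \<ge> 1"
proof -
  obtain H where H: "H \<in> X" "F \<subseteq> H" "card H = k + 1" using maximal_above assms
    by (auto simp: faces_def)
  have "finite {H \<in> faces X (k + 1). F \<subseteq> H}" using fin_X by (simp add: faces_def)
  moreover have "H \<in> {H \<in> faces X (k + 1). F \<subseteq> H}" using H by (simp add: faces_def)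
  ultimately show ?thesis unfolding deg_def by (metis card_0_eq empty_iff less_one not_le)
qed

lemma fin_union: "finite (\<Union>X)" using fin_X fin_face by auto

lemma lv_eq: assumes "\<sigma> \<in> X"
  shows "link_vertices X \<sigma> = {v. v \<notin> \<sigma> \<and> insert v \<sigma> \<in> X}"
proof -
  have "{v} \<in> link X \<sigma> \<longleftrightarrow> v \<notin> \<sigma> \<and> insert v \<sigma> \<in> X" for v
    unfolding link_def using sub_face[of "insert v \<sigma>" "{v}"] by auto
  then show ?thesis unfolding link_vertices_def by auto
qed

lemma fin_lv: assumes "\<sigma> \<in> X" shows "finite (link_vertices X \<sigma>)"
proof -
  have "link_vertices X \<sigma> \<subseteq> \<Union>X" unfolding lv_eq[OF assms] by auto
  then show ?thesis using fin_union finite_subset by blast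
qed

lemma ladj_eq: assumes "\<sigma> \<in> X"
  shows "link_adj X \<sigma> v w \<longleftrightarrow> v \<noteq> w \<and> v \<notin> \<sigma> \<and> w \<notin> \<sigma> \<and> insert v (insert w \<sigma>) \<in> X"
  unfolding link_adj_def link_def using sub_face[of "insert v (insert w \<sigma>)" "{v,w}"]
  by (auto simp: insert_commute)

lemma ladj_sym: "link_adj X \<sigma> v w = link_adj X \<sigma> w v"
  unfolding link_adj_def by (auto simp: insert_commute)

lemma incid_sq: "incidence F G * incidence F G = (if G \<subseteq> F \<and> card (F - G) = 1 then 1 else 0)"
  unfolding incidence_def by (simp add: power_mult_distrib[symmetric] power_even_eq[symmetric])

lemma ext_faces: assumes "F \<in> X" "card F = c"
  shows "{H \<in> faces X (c+1). F \<subseteq> H} = (\<lambda>w. insert w F) ` {w. w \<notin> F \<and> insert w F \<in> X}"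
proof
  have finF: "finite F" using fin_face assms by simp
  show "{H \<in> faces X (c+1). F \<subseteq> H} \<subseteq> (\<lambda>w. insert w F) ` {w. w \<notin> F \<and> insert w F \<in> X}"
  proof
    fix H assume "H \<in> {H \<in> faces X (c+1). F \<subseteq> H}"
    then have H: "H \<in> X" "card H = c + 1" "F \<subseteq> H" by (auto simp: faces_def)
    have "finite H" using fin_face H by simp
    then have "card (H - F) = 1" using H assms finF by (simp add: card_Diff_subset)
    then obtain w where w: "H - F = {w}" by (auto simp: card_Suc_eq)
    then have "H = insert w F" "w \<notin> F" using H by auto
    then show "H \<in> (\<lambda>w. insert w F) ` {w. w \<notin> F \<and> insert w F \<in> X}" using H by auto
  qed
  show "(\<lambda>w. insert w F) ` {w. w \<notin> F \<and> insert w F \<in> X} \<subseteq> {H \<in> faces X (c+1). F \<subseteq> H}"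
    using finF assms by (auto simp: faces_def)
qed

lemma card_ext: assumes "F \<in> X" "card F = c"
  shows "card {H \<in> faces X (c+1). F \<subseteq> H} = card {w. w \<notin> F \<and> insert w F \<in> X}"
  unfolding ext_faces[OF assms]
  by (rule card_image) (auto simp: inj_on_def insert_ident)

lemma card_insert_face: assumes "\<sigma> \<in> faces X (k-1)" "v \<notin> \<sigma>"
  shows "card (insert v \<sigma>) = k"
  using assms k1 fin_face by (auto simp: faces_def)

lemma ld_deg: assumes s: "\<sigma> \<in> faces X (k-1)" and v: "v \<in> link_vertices X \<sigma>"
  shows "link_degree X \<sigma> v = deg X k (insert v \<sigma>)"
proof -
  have sX: "\<sigma> \<in> X" using s by (simp add: faces_def)
  have v': "v \<notin> \<sigma>" "insert v \<sigma> \<in> X" using v lv_eq[OF sX] by auto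
  have "{w \<in> link_vertices X \<sigma>. link_adj X \<sigma> v w} = {w. w \<notin> insert v \<sigma> \<and> insert w (insert v \<sigma>) \<in> X}"
    unfolding lv_eq[OF sX] ladj_eq[OF sX] using v'
    by (auto simp: insert_commute intro: sub_face[of "insert w (insert v \<sigma>)" "insert w \<sigma>" for w])
  then show ?thesis unfolding link_degree_def deg_def
    using card_ext[OF v'(2) card_insert_face[OF s v'(1)]] by simp
qed

lemma fin_faces: "finite (faces X c)" using fin_X by (simp add: faces_def)

lemma sum_loc1:
  "(\<Sum>\<sigma>\<in>faces X (k-1). \<Sum>v\<in>link_vertices X \<sigma>. h (insert v \<sigma>) v)
   = (\<Sum>F\<in>faces X k. \<Sum>v\<in>F. h F v)"
proof -
  let ?S = "faces X (k-1)" and ?N = "faces X k"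
  have finV: "\<forall>\<sigma>\<in>?S. finite (link_vertices X \<sigma>)" using fin_lv by (auto simp: faces_def)
  have finF: "\<forall>F\<in>?N. finite F" using fin_face by (auto simp: faces_def)
  have bij: "bij_betw (\<lambda>(\<sigma>, v). (insert v \<sigma>, v)) (Sigma ?S (link_vertices X)) (Sigma ?N (\<lambda>F. F))"
  proof (rule bij_betw_byWitness[where f' = "\<lambda>(F,v). (F - {v}, v)"])
    show "\<forall>a\<in>Sigma ?S (link_vertices X). (case case a of (\<sigma>, v) \<Rightarrow> (insert v \<sigma>, v) of (F, v) \<Rightarrow> (F - {v}, v)) = a"
    by (auto simp: faces_def lv_eq)
    show "\<forall>a\<in>Sigma ?N (\<lambda>F. F). (case case a of (F, v) \<Rightarrow> (F - {v}, v) of (\<sigma>, v) \<Rightarrow> (insert v \<sigma>, v)) = a"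
    by auto
    show "(\<lambda>(\<sigma>, v). (insert v \<sigma>, v)) ` Sigma ?S (link_vertices X) \<subseteq> Sigma ?N (\<lambda>F. F)"
    proof
      fix p assume "p \<in> (\<lambda>(\<sigma>, v). (insert v \<sigma>, v)) ` Sigma ?S (link_vertices X)"
      then obtain \<sigma> v where sv: "\<sigma> \<in> ?S" "v \<in> link_vertices X \<sigma>" "p = (insert v \<sigma>, v)" by auto
      then have "v \<notin> \<sigma>" "insert v \<sigma> \<in> X" using lv_eq by (auto simp: faces_def)
      then show "p \<in> Sigma ?N (\<lambda>F. F)" using sv card_insert_face by (auto simp: faces_def)
    qed
    show "(\<lambda>(F, v). (F - {v}, v)) ` Sigma ?N (\<lambda>F. F) \<subseteq> Sigma ?S (link_vertices X)"
    proof
    fix p assume "p \<in> (\<lambda>(F, v). (F - {v}, v)) ` Sigma ?N (\<lambda>F. F)"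
    then obtain F v where F: "F \<in> ?N" "v \<in> F" and p: "p = (F - {v}, v)" by auto
    then have FX: "F \<in> X" "card F = k" "finite F" using fin_face by (auto simp: faces_def)
    then have "F - {v} \<in> X" using sub_face by auto
    moreover have "card (F - {v}) = k - 1" using FX F by simp
    moreover have "insert v (F - {v}) = F" using F by auto
    ultimately show "p \<in> Sigma ?S (link_vertices X)"
      using FX p by (auto simp: faces_def lv_eq)
    qed
  qed
  have "(\<Sum>(\<sigma>,v)\<in>Sigma ?S (link_vertices X). h (insert v \<sigma>) v) = (\<Sum>(F,v)\<in>Sigma ?N (\<lambda>F. F). h F v)"
    using sum.reindex_bij_betw[OF bij, of "\<lambda>(F,v). h F v"] by (simp add: split_def)
  have "(\<Sum>\<sigma>\<in>?S. \<Sum>v\<in>link_vertices X \<sigma>. h (insert v \<sigma>) v)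
      = (\<Sum>(\<sigma>,v)\<in>Sigma ?S (link_vertices X). h (insert v \<sigma>) v)"
    by (rule sum.Sigma[OF fin_faces finV])
  also have "\<dots> = (\<Sum>(F,v)\<in>Sigma ?N (\<lambda>F. F). h F v)" by fact
  also have "\<dots> = (\<Sum>F\<in>?N. \<Sum>v\<in>F. h F v)"
    by (rule sum.Sigma[OF fin_faces finF, symmetric])
  finally show ?thesis .
qed

lemma diff_one: assumes F: "F \<in> faces X k" and G: "G \<in> faces X k" and c: "card (F \<inter> G) = k - 1"
  shows "\<exists>v. F - G = {v}"
proof -
  have fin: "finite F" using F fin_face by (auto simp: faces_def)
  have e: "F - G = F - (F \<inter> G)" by auto
  have "card (F - G) = card F - card (F \<inter> G)"
    unfolding e using fin by (intro card_Diff_subset) auto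
  also have "\<dots> = 1" using F c k1 by (simp add: faces_def)
  finally show ?thesis by (auto simp: card_Suc_eq)
qed

lemma sum_loc2:
  "(\<Sum>\<sigma>\<in>faces X (k-1). \<Sum>v\<in>link_vertices X \<sigma>. \<Sum>w\<in>link_vertices X \<sigma>.
      if link_adj X \<sigma> v w then T (insert v \<sigma>) (insert w \<sigma>) else 0)
   = (\<Sum>F\<in>faces X k. \<Sum>G\<in>faces X k.
      if card (F \<inter> G) = k - 1 \<and> F \<union> G \<in> faces X (k+1) then T F G else 0)"
proof -
  let ?S = "faces X (k-1)" and ?N = "faces X k" and ?V = "link_vertices X"
  define E where "E \<sigma> = {p \<in> ?V \<sigma> \<times> ?V \<sigma>. link_adj X \<sigma> (fst p) (snd p)}" for \<sigma>
  define T1 where "T1 = Sigma ?S E"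
  define T2 where "T2 = {q \<in> ?N \<times> ?N. card (fst q \<inter> snd q) = k - 1 \<and> fst q \<union> snd q \<in> faces X (k+1)}"
  have finV: "\<And>\<sigma>. \<sigma> \<in> ?S \<Longrightarrow> finite (?V \<sigma>)" using fin_lv by (auto simp: faces_def)
  have finE: "\<forall>\<sigma>\<in>?S. finite (E \<sigma>)" using finV by (auto simp: E_def)
  have L: "(\<Sum>v\<in>?V \<sigma>. \<Sum>w\<in>?V \<sigma>. if link_adj X \<sigma> v w then T (insert v \<sigma>) (insert w \<sigma>) else 0)
     = (\<Sum>p\<in>E \<sigma>. T (insert (fst p) \<sigma>) (insert (snd p) \<sigma>))" if "\<sigma> \<in> ?S" for \<sigma>
  proof -
    have "(\<Sum>v\<in>?V \<sigma>. \<Sum>w\<in>?V \<sigma>. if link_adj X \<sigma> v w then T (insert v \<sigma>) (insert w \<sigma>) else 0)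
       = (\<Sum>p\<in>?V \<sigma> \<times> ?V \<sigma>. if link_adj X \<sigma> (fst p) (snd p) then T (insert (fst p) \<sigma>) (insert (snd p) \<sigma>) else 0)"
      by (subst sum.cartesian_product) (simp add: split_def)
    also have "\<dots> = (\<Sum>p\<in>E \<sigma>. T (insert (fst p) \<sigma>) (insert (snd p) \<sigma>))"
      unfolding E_def using finV[OF that] by (simp add: sum.inter_filter)
    finally show ?thesis .
  qed
  have R: "(\<Sum>F\<in>?N. \<Sum>G\<in>?N. if card (F \<inter> G) = k - 1 \<and> F \<union> G \<in> faces X (k+1) then T F G else 0)
     = (\<Sum>q\<in>T2. T (fst q) (snd q))"
  proof -
    have "(\<Sum>F\<in>?N. \<Sum>G\<in>?N. if card (F \<inter> G) = k - 1 \<and> F \<union> G \<in> faces X (k+1) then T F G else 0)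
       = (\<Sum>q\<in>?N \<times> ?N. if card (fst q \<inter> snd q) = k - 1 \<and> fst q \<union> snd q \<in> faces X (k+1) then T (fst q) (snd q) else 0)"
      by (subst sum.cartesian_product) (simp add: split_def)
    also have "\<dots> = (\<Sum>q\<in>T2. T (fst q) (snd q))"
      unfolding T2_def using fin_faces by (simp add: sum.inter_filter)
    finally show ?thesis .
  qed
  define \<phi> where "\<phi> = (\<lambda>x::'v set \<times> 'v \<times> 'v. (insert (fst (snd x)) (fst x), insert (snd (snd x)) (fst x)))"
  define \<psi> where "\<psi> = (\<lambda>q::'v set \<times> 'v set. (fst q \<inter> snd q, the_elem (fst q - snd q), the_elem (snd q - fst q)))"
  have T1D: "\<sigma> \<in> X \<and> card \<sigma> = k - 1 \<and> v \<noteq> w \<and> v \<notin> \<sigma> \<and> w \<notin> \<sigma> \<and> insert v (insert w \<sigma>) \<in> X"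
    if "(\<sigma>, v, w) \<in> T1" for \<sigma> v w
    using that by (auto simp: T1_def E_def faces_def ladj_eq)
  have bij: "bij_betw \<phi> T1 T2"
  proof (rule bij_betw_byWitness[where f' = \<psi>])
    show "\<forall>a\<in>T1. \<psi> (\<phi> a) = a"
    proof
      fix a assume a: "a \<in> T1"
      obtain \<sigma> v w where aa: "a = (\<sigma>, v, w)" by (cases a) auto
      from T1D[of \<sigma> v w] a aa have "v \<noteq> w" "v \<notin> \<sigma>" "w \<notin> \<sigma>" by auto
      then have "insert v \<sigma> \<inter> insert w \<sigma> = \<sigma>" "insert v \<sigma> - insert w \<sigma> = {v}" "insert w \<sigma> - insert v \<sigma> = {w}"
        by auto
      then show "\<psi> (\<phi> a) = a" by (simp add: \<psi>_def \<phi>_def aa)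
    qed
    show "\<forall>b\<in>T2. \<phi> (\<psi> b) = b"
    proof
      fix b assume b: "b \<in> T2"
      obtain F G where bb: "b = (F, G)" by (cases b) auto
      from b bb have FG: "F \<in> ?N" "G \<in> ?N" "card (F \<inter> G) = k - 1" by (auto simp: T2_def)
      obtain v where v: "F - G = {v}" using diff_one[OF FG] by blast
      have cGF: "card (G \<inter> F) = k - 1" using FG(3) by (simp add: Int_commute)
      obtain w where w: "G - F = {w}" using diff_one[OF FG(2) FG(1) cGF] by blast
      have "insert v (F \<inter> G) = F" "insert w (F \<inter> G) = G" using v w by blast+
      then show "\<phi> (\<psi> b) = b" by (simp add: \<psi>_def \<phi>_def bb v w Int_commute)
    qed
    show "\<phi> ` T1 \<subseteq> T2"
    proof
      fix b assume "b \<in> \<phi> ` T1"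
      then obtain \<sigma> v w where a: "(\<sigma>, v, w) \<in> T1" and bb: "b = (insert v \<sigma>, insert w \<sigma>)"
        by (auto simp: \<phi>_def)
      from T1D[OF a] have h: "\<sigma> \<in> X" "card \<sigma> = k - 1" "v \<noteq> w" "v \<notin> \<sigma>" "w \<notin> \<sigma>" 
        "insert v (insert w \<sigma>) \<in> X" by auto
      have fs: "finite \<sigma>" using fin_face h by simp
      have "insert v \<sigma> \<in> X" "insert w \<sigma> \<in> X" using h sub_face[OF h(6)] by auto
      moreover have "card (insert v \<sigma>) = k" "card (insert w \<sigma>) = k" using h fs k1 by auto
      moreover have "insert v \<sigma> \<inter> insert w \<sigma> = \<sigma>" using h by auto
      moreover have "insert v \<sigma> \<union> insert w \<sigma> = insert v (insert w \<sigma>)" by auto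
      moreover have "card (insert v (insert w \<sigma>)) = k + 1" using h fs k1 by auto
      ultimately show "b \<in> T2" using h by (simp add: T2_def faces_def bb)
    qed
    show "\<psi> ` T2 \<subseteq> T1"
    proof
      fix a assume "a \<in> \<psi> ` T2"
      then obtain F G where b: "(F, G) \<in> T2" and aa: "a = \<psi> (F, G)" by auto
      from b have FG: "F \<in> ?N" "G \<in> ?N" "card (F \<inter> G) = k - 1" "F \<union> G \<in> faces X (k+1)"
        by (auto simp: T2_def)
      obtain v where v: "F - G = {v}" using diff_one[OF FG(1-3)] by blast
      have cGF: "card (G \<inter> F) = k - 1" using FG(3) by (simp add: Int_commute)
      obtain w where w: "G - F = {w}" using diff_one[OF FG(2) FG(1) cGF] by blast
      have Fv: "insert v (F \<inter> G) = F" and Gw: "insert w (F \<inter> G) = G" using v w by blast+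
      have vw: "v \<noteq> w" "v \<notin> F \<inter> G" "w \<notin> F \<inter> G" using v w by auto
      have FX: "F \<in> X" "G \<in> X" "F \<union> G \<in> X" using FG by (auto simp: faces_def)
      have sX: "F \<inter> G \<in> X" using FX sub_face by blast
      have "insert v (insert w (F \<inter> G)) = F \<union> G" using Fv Gw by blast
      then have adj: "link_adj X (F \<inter> G) v w" using ladj_eq[OF sX] vw FX by simp
      have "v \<in> ?V (F \<inter> G)" "w \<in> ?V (F \<inter> G)" using lv_eq[OF sX] vw Fv Gw FX by auto
      then show "a \<in> T1" using aa adj sX FG(3) v w
        by (simp add: \<psi>_def T1_def E_def faces_def)
    qed
  qed
  have "(\<Sum>\<sigma>\<in>?S. \<Sum>v\<in>?V \<sigma>. \<Sum>w\<in>?V \<sigma>. if link_adj X \<sigma> v w then T (insert v \<sigma>) (insert w \<sigma>) else 0)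
     = (\<Sum>\<sigma>\<in>?S. \<Sum>p\<in>E \<sigma>. T (insert (fst p) \<sigma>) (insert (snd p) \<sigma>))" using L by simp
  also have "\<dots> = (\<Sum>x\<in>T1. T (fst (\<phi> x)) (snd (\<phi> x)))"
    unfolding T1_def by (subst sum.Sigma[OF fin_faces finE]) (simp add: \<phi>_def split_def)
  also have "\<dots> = (\<Sum>q\<in>T2. T (fst q) (snd q))"
    by (rule sum.reindex_bij_betw[OF bij])
  finally show ?thesis using R by simp
qed

lemma orth_loc: assumes orth: "orth_B X k f" and s: "\<sigma> \<in> faces X (k-1)"
  shows "(\<Sum>v\<in>link_vertices X \<sigma>. real (deg X k (insert v \<sigma>)) * f (insert v \<sigma>) * incidence (insert v \<sigma>) \<sigma>) = 0"
proof -
  define g where "g = (\<lambda>G. if G = \<sigma> then 1 else (0::real))"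
  have cb: "coboundary X (k-1) g H = incidence H \<sigma>" for H
    unfolding coboundary_def g_def using s fin_faces[of "k-1"]
    by (simp add: if_distrib[of "\<lambda>x. _ * x"] sum.delta' cong: if_cong)
  have sX: "\<sigma> \<in> X" using s by (simp add: faces_def)
  have "inner_w X k f (coboundary X (k-1) g) = 0" using orth unfolding orth_B_def by blast
  then have "0 = (\<Sum>F\<in>faces X k. real (deg X k F) * f F * incidence F \<sigma>)"
    unfolding inner_w_def cb by (simp add: mult.commute mult.left_commute)
  also have "\<dots> = (\<Sum>F\<in>(\<lambda>v. insert v \<sigma>) ` link_vertices X \<sigma>. real (deg X k F) * f F * incidence F \<sigma>)"
  proof (rule sum.mono_neutral_right[OF fin_faces])
    show "(\<lambda>v. insert v \<sigma>) ` link_vertices X \<sigma> \<subseteq> faces X k"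
      using lv_eq[OF sX] card_insert_face[OF s] by (auto simp: faces_def)
    show "\<forall>F\<in>faces X k - (\<lambda>v. insert v \<sigma>) ` link_vertices X \<sigma>. real (deg X k F) * f F * incidence F \<sigma> = 0"
    proof
      fix F assume F: "F \<in> faces X k - (\<lambda>v. insert v \<sigma>) ` link_vertices X \<sigma>"
      show "real (deg X k F) * f F * incidence F \<sigma> = 0"
      proof (cases "\<sigma> \<subseteq> F \<and> card (F - \<sigma>) = 1")
        case True
        then obtain v where v: "F - \<sigma> = {v}" by (auto simp: card_Suc_eq)
        then have "F = insert v \<sigma>" "v \<notin> \<sigma>" using True by auto
        moreover have "F \<in> X" using F by (auto simp: faces_def)
        ultimately have "F \<in> (\<lambda>v. insert v \<sigma>) ` link_vertices X \<sigma>" using lv_eq[OF sX] by auto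
        then show ?thesis using F by simp
      next
        case False then have "incidence F \<sigma> = 0" unfolding incidence_def by auto
        then show ?thesis by simp
      qed
    qed
  qed
  also have "\<dots> = (\<Sum>v\<in>link_vertices X \<sigma>. real (deg X k (insert v \<sigma>)) * f (insert v \<sigma>) * incidence (insert v \<sigma>) \<sigma>)"
    by (subst sum.reindex) (auto simp: inj_on_def lv_eq[OF sX] insert_ident)
  finally show ?thesis by simp
qed

lemma eps_sq: assumes "v \<notin> \<sigma>" shows "incidence (insert v \<sigma>) \<sigma> * incidence (insert v \<sigma>) \<sigma> = 1"
proof -
  have "insert v \<sigma> - \<sigma> = {v}" using assms by auto
  then show ?thesis by (simp add: incid_sq subset_insertI)
qed

lemma loc_bound:
  fixes lmin lmax :: real
  assumes spec: "\<forall>\<mu>s. char_poly (link_laplacian X \<sigma>) = [:0, 1:] * (\<Prod>\<mu>\<leftarrow>\<mu>s. [:- \<mu>, 1:])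
          \<longrightarrow> (\<forall>\<mu>\<in>set \<mu>s. lmin \<le> \<mu> \<and> \<mu> \<le> lmax)"
    and s: "\<sigma> \<in> faces X (k-1)" and orth: "orth_B X k f"
  defines "loc \<equiv> \<lambda>v. incidence (insert v \<sigma>) \<sigma> * f (insert v \<sigma>)"
  defines "Nl \<equiv> (\<Sum>v\<in>link_vertices X \<sigma>. real (link_degree X \<sigma> v) * (loc v)^2)"
  defines "Ml \<equiv> (\<Sum>v\<in>link_vertices X \<sigma>. \<Sum>w\<in>link_vertices X \<sigma>. (if link_adj X \<sigma> v w then 1 else 0) * loc v * loc w)"
  shows "lmin * Nl \<le> Nl - Ml \<and> Nl - Ml \<le> lmax * Nl"
proof -
  let ?V = "link_vertices X \<sigma>"
  have sX: "\<sigma> \<in> X" using s by (simp add: faces_def)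
  have finV: "finite ?V" using fin_lv[OF sX] .
  define vs where "vs = sorted_list_of_set ?V"
  define m where "m = length vs"
  have setvs: "set vs = ?V" using finV by (simp add: vs_def)
  have vsV: "vs ! i \<in> ?V" if "i < m" for i
    using nth_mem[of i vs] that setvs by (simp add: m_def)
  define a where "a = (\<lambda>i j. if link_adj X \<sigma> (vs!i) (vs!j) then 1 else (0::real))"
  define d where "d = (\<lambda>i. real (link_degree X \<sigma> (vs!i)))"
  define x where "x = (\<lambda>i. loc (vs!i))"
  have asym: "a i j = a j i" for i j
  proof -
    have "link_adj X \<sigma> (vs!i) (vs!j) = link_adj X \<sigma> (vs!j) (vs!i)" by (rule ladj_sym)
    then show ?thesis unfolding a_def by simp
  qed
  have dpos: "d i > 0" if "i < m" for i
  proof -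
    have v: "vs!i \<in> ?V" using vsV[OF that] .
    then have "insert (vs!i) \<sigma> \<in> faces X k" using lv_eq[OF sX] card_insert_face[OF s] by (auto simp: faces_def)
    from deg_pos[OF this] show ?thesis unfolding d_def ld_deg[OF s v] by simp
  qed
  have drow: "d i = (\<Sum>j<m. a i j)" if "i < m" for i
  proof -
    have "d i = real (card {w \<in> ?V. link_adj X \<sigma> (vs!i) w})" by (simp add: d_def link_degree_def)
    also have "\<dots> = (\<Sum>w\<in>?V. if link_adj X \<sigma> (vs!i) w then 1 else 0)"
      using finV by (simp add: sum.inter_filter[symmetric])
    also have "\<dots> = (\<Sum>j<m. a i j)" unfolding a_def m_def vs_def by (rule sum_sorted[OF finV])
    finally show ?thesis .
  qed
  have LL: "link_laplacian X \<sigma> = mat m m (\<lambda>(i,j). (if i = j then 1 else 0) - a i j / d i)"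
    unfolding link_laplacian_def Let_def vs_def[symmetric] m_def[symmetric] a_def d_def
    by (intro cong_mat refl) auto
  have hyp: "\<forall>\<mu>s. char_poly (mat m m (\<lambda>(i,j). (if i = j then 1 else 0) - a i j / d i))
                 = [:0,1:] * (\<Prod>\<mu>\<leftarrow>\<mu>s. [:-\<mu>,1:]) \<longrightarrow> (\<forall>\<mu>\<in>set \<mu>s. lmin \<le> \<mu> \<and> \<mu> \<le> lmax)"
    using spec unfolding LL .
  have x0: "(\<Sum>i<m. d i * x i) = 0"
  proof -
    have "(\<Sum>i<m. d i * x i) = (\<Sum>v\<in>?V. real (link_degree X \<sigma> v) * loc v)"
      unfolding d_def x_def m_def vs_def by (rule sum_sorted[OF finV, symmetric])
    also have "\<dots> = (\<Sum>v\<in>?V. real (deg X k (insert v \<sigma>)) * f (insert v \<sigma>) * incidence (insert v \<sigma>) \<sigma>)"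
      by (intro sum.cong refl) (simp add: ld_deg[OF s] loc_def)
    also have "\<dots> = 0" using orth_loc[OF orth s] .
    finally show ?thesis .
  qed
  have gb: "lmin * (\<Sum>i<m. d i * (x i)^2) \<le> (\<Sum>i<m. d i * (x i)^2) - (\<Sum>i<m. \<Sum>j<m. a i j * x i * x j)
       \<and> (\<Sum>i<m. d i * (x i)^2) - (\<Sum>i<m. \<Sum>j<m. a i j * x i * x j) \<le> lmax * (\<Sum>i<m. d i * (x i)^2)"
    by (rule graph_bound[where m=m and a=a and d=d and x=x]) (use asym dpos drow hyp x0 in auto)
  have e1: "(\<Sum>i<m. d i * (x i)^2) = Nl"
    unfolding Nl_def d_def x_def m_def vs_def by (rule sum_sorted[OF finV, symmetric])
  have e2: "(\<Sum>i<m. \<Sum>j<m. a i j * x i * x j) = Ml"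
  proof -
    have "Ml = (\<Sum>i<m. \<Sum>w\<in>?V. (if link_adj X \<sigma> (vs!i) w then 1 else 0) * loc (vs!i) * loc w)"
      unfolding Ml_def m_def vs_def by (rule sum_sorted[OF finV])
    also have "\<dots> = (\<Sum>i<m. \<Sum>j<m. a i j * x i * x j)"
      unfolding a_def x_def m_def vs_def by (intro sum.cong refl sum_sorted[OF finV])
    finally show ?thesis by simp
  qed
  show ?thesis using gb unfolding e1 e2 .
qed

lemma main_quad:
  fixes lmin lmax :: real
  assumes spec: "\<forall>F\<in>faces X (k - 1). \<forall>\<mu>s.
          char_poly (link_laplacian X F) = [:0, 1:] * (\<Prod>\<mu>\<leftarrow>\<mu>s. [:- \<mu>, 1:])
          \<longrightarrow> (\<forall>\<mu>\<in>set \<mu>s. lmin \<le> \<mu> \<and> \<mu> \<le> lmax)"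
    and orth: "orth_B X k f"
  shows "(1 + real k * lmin - real k) * inner_w X k f f \<le> inner_w X k (up_laplacian X k f) f
       \<and> inner_w X k (up_laplacian X k f) f \<le> (1 + real k * lmax - real k) * inner_w X k f f"
proof -
  let ?S = "faces X (k-1)" and ?N = "faces X k" and ?V = "link_vertices X"
  define loc where "loc = (\<lambda>\<sigma> v. incidence (insert v \<sigma>) \<sigma> * f (insert v \<sigma>))"
  define Nl where "Nl = (\<lambda>\<sigma>. \<Sum>v\<in>?V \<sigma>. real (link_degree X \<sigma> v) * (loc \<sigma> v)^2)"
  define Ml where "Ml = (\<lambda>\<sigma>. \<Sum>v\<in>?V \<sigma>. \<Sum>w\<in>?V \<sigma>. (if link_adj X \<sigma> v w then 1 else 0) * loc \<sigma> v * loc \<sigma> w)"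
  define ff where "ff = inner_w X k f f"
  define Lf where "Lf = inner_w X k (up_laplacian X k f) f"
  define T where "T = (\<lambda>F G. adj_up X k F G * f F * f G)"
  have each: "lmin * Nl \<sigma> \<le> Nl \<sigma> - Ml \<sigma> \<and> Nl \<sigma> - Ml \<sigma> \<le> lmax * Nl \<sigma>" if s: "\<sigma> \<in> ?S" for \<sigma>
    using loc_bound[of \<sigma> lmin lmax f] spec s orth unfolding Nl_def Ml_def loc_def by blast
  have A: "(\<Sum>\<sigma>\<in>?S. Nl \<sigma>) = real k * ff"
  proof -
    have "(\<Sum>\<sigma>\<in>?S. Nl \<sigma>) = (\<Sum>\<sigma>\<in>?S. \<Sum>v\<in>?V \<sigma>. real (deg X k (insert v \<sigma>)) * (f (insert v \<sigma>))^2)"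
      unfolding Nl_def
    proof (intro sum.cong refl)
      fix \<sigma> v assume s: "\<sigma> \<in> ?S" and v: "v \<in> ?V \<sigma>"
      have "v \<notin> \<sigma>" using v lv_eq s by (auto simp: faces_def)
      then have "(loc \<sigma> v)^2 = (f (insert v \<sigma>))^2"
        using eps_sq[of v \<sigma>] by (simp add: loc_def power2_eq_square algebra_simps)
      then show "real (link_degree X \<sigma> v) * (loc \<sigma> v)^2 = real (deg X k (insert v \<sigma>)) * (f (insert v \<sigma>))^2"
        using ld_deg[OF s v] by simp
    qed
    also have "\<dots> = (\<Sum>F\<in>?N. \<Sum>v\<in>F. real (deg X k F) * (f F)^2)"
      by (rule sum_loc1)
    also have "\<dots> = (\<Sum>F\<in>?N. real k * (real (deg X k F) * f F * f F))"
      by (intro sum.cong refl) (auto simp: faces_def power2_eq_square)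
    also have "\<dots> = real k * ff" unfolding ff_def inner_w_def by (simp add: sum_distrib_left)
    finally show ?thesis .
  qed
  have B: "(\<Sum>\<sigma>\<in>?S. Ml \<sigma>) = (\<Sum>F\<in>?N. \<Sum>G\<in>?N. T F G)"
  proof -
    have "(\<Sum>\<sigma>\<in>?S. Ml \<sigma>) = (\<Sum>\<sigma>\<in>?S. \<Sum>v\<in>?V \<sigma>. \<Sum>w\<in>?V \<sigma>.
      if link_adj X \<sigma> v w then T (insert v \<sigma>) (insert w \<sigma>) else 0)"
      unfolding Ml_def
    proof (intro sum.cong refl)
      fix \<sigma> v w assume s: "\<sigma> \<in> ?S" and v: "v \<in> ?V \<sigma>" and w: "w \<in> ?V \<sigma>"
      have sX: "\<sigma> \<in> X" and cs: "card \<sigma> = k - 1" using s by (auto simp: faces_def)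
      have fs: "finite \<sigma>" using fin_face sX by simp
      show "(if link_adj X \<sigma> v w then 1 else 0) * loc \<sigma> v * loc \<sigma> w
          = (if link_adj X \<sigma> v w then T (insert v \<sigma>) (insert w \<sigma>) else 0)"
      proof (cases "link_adj X \<sigma> v w")
        case True
        then have h: "v \<noteq> w" "v \<notin> \<sigma>" "w \<notin> \<sigma>" "insert v (insert w \<sigma>) \<in> X" using ladj_eq[OF sX] by auto
        have i: "insert v \<sigma> \<inter> insert w \<sigma> = \<sigma>" using h by auto
        have u: "insert v \<sigma> \<union> insert w \<sigma> = insert v (insert w \<sigma>)" by auto
        have "card (insert v (insert w \<sigma>)) = k + 1" using h fs cs k1 by auto
        then have "adj_up X k (insert v \<sigma>) (insert w \<sigma>) = incidence (insert v \<sigma>) \<sigma> * incidence (insert w \<sigma>) \<sigma>"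
          unfolding adj_up_def i u using h cs by (simp add: faces_def)
        then show ?thesis using True by (simp add: T_def loc_def mult_ac)
      qed simp
    qed
    also have "\<dots> = (\<Sum>F\<in>?N. \<Sum>G\<in>?N. if card (F \<inter> G) = k - 1 \<and> F \<union> G \<in> faces X (k+1) then T F G else 0)"
      by (rule sum_loc2)
    also have "\<dots> = (\<Sum>F\<in>?N. \<Sum>G\<in>?N. T F G)"
      by (intro sum.cong refl) (auto simp: T_def adj_up_def)
    finally show ?thesis .
  qed
  have C: "Lf = ff - (\<Sum>F\<in>?N. \<Sum>G\<in>?N. T F G)"
  proof -
    have "Lf = (\<Sum>F\<in>?N. real (deg X k F) * f F * f F - (\<Sum>G\<in>?N. T F G))"
      unfolding Lf_def inner_w_def up_laplacian_def
    proof (intro sum.cong refl)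
      fix F assume F: "F \<in> ?N"
      have "real (deg X k F) \<noteq> 0" using deg_pos[OF F] by simp
      then show "real (deg X k F) * (f F - 1 / real (deg X k F) * (\<Sum>G\<in>?N. adj_up X k F G * f G)) * f F
          = real (deg X k F) * f F * f F - (\<Sum>G\<in>?N. T F G)"
        by (simp add: T_def field_simps sum_distrib_left sum_distrib_right)
    qed
    then show ?thesis unfolding ff_def inner_w_def by (simp add: sum_subtractf)
  qed
  have "lmin * (\<Sum>\<sigma>\<in>?S. Nl \<sigma>) \<le> (\<Sum>\<sigma>\<in>?S. Nl \<sigma>) - (\<Sum>\<sigma>\<in>?S. Ml \<sigma>)"
    unfolding sum_distrib_left sum_subtractf[symmetric] by (rule sum_mono) (use each in auto)
  moreover have "(\<Sum>\<sigma>\<in>?S. Nl \<sigma>) - (\<Sum>\<sigma>\<in>?S. Ml \<sigma>) \<le> lmax * (\<Sum>\<sigma>\<in>?S. Nl \<sigma>)"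
    unfolding sum_distrib_left sum_subtractf[symmetric] by (rule sum_mono) (use each in auto)
  ultimately have "lmin * (real k * ff) \<le> real k * ff - (ff - Lf)"
    "real k * ff - (ff - Lf) \<le> lmax * (real k * ff)"
    unfolding A B C by auto
  then show ?thesis unfolding ff_def[symmetric] Lf_def[symmetric] by (simp add: algebra_simps)
qed

end

theorem theorem3p1:
  fixes X :: "'v::linorder set set" and k :: nat and lmin lmax :: real
  assumes "simplicial_complex X"
    and "k \<ge> 1"
    and "pure_dim X k"
    and link_spec: "\<forall>F\<in>faces X (k - 1). \<forall>\<mu>s.
          char_poly (link_laplacian X F) = [:0, 1:] * (\<Prod>\<mu>\<leftarrow>\<mu>s. [:- \<mu>, 1:])
          \<longrightarrow> (\<forall>\<mu>\<in>set \<mu>s. lmin \<le> \<mu> \<and> \<mu> \<le> lmax)"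
  shows "(\<forall>f. orth_B X k f \<longrightarrow>
            (1 + real k * lmin - real k) * inner_w X k f f \<le> inner_w X k (up_laplacian X k f) f
          \<and> inner_w X k (up_laplacian X k f) f \<le> (1 + real k * lmax - real k) * inner_w X k f f)
       \<and> (\<forall>f ev. orth_B X k f \<and> (\<exists>F\<in>faces X k. f F \<noteq> 0)
               \<and> (\<forall>F\<in>faces X k. up_laplacian X k f F = ev * f F)
            \<longrightarrow> 1 + real k * lmin - real k \<le> ev \<and> ev \<le> 1 + real k * lmax - real k)"
proof -
  note Q = main_quad[OF assms(1-3) link_spec]
  show ?thesis
  proof (intro conjI allI impI)
    fix f assume "orth_B X k f"
    then show "(1 + real k * lmin - real k) * inner_w X k f f \<le> inner_w X k (up_laplacian X k f) f"
      "inner_w X k (up_laplacian X k f) f \<le> (1 + real k * lmax - real k) * inner_w X k f f"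
      using Q by auto
  next
    fix f ev assume H: "orth_B X k f \<and> (\<exists>F\<in>faces X k. f F \<noteq> 0)
               \<and> (\<forall>F\<in>faces X k. up_laplacian X k f F = ev * f F)"
    then obtain F0 where F0: "F0 \<in> faces X k" "f F0 \<noteq> 0" by blast
    have Lf: "inner_w X k (up_laplacian X k f) f = ev * inner_w X k f f"
      unfolding inner_w_def using H by (simp add: sum_distrib_left mult_ac)
    have "inner_w X k f f > 0"
      unfolding inner_w_def
    proof (rule sum_pos2[OF fin_faces[OF assms(1-3)] F0(1)])
      show "0 < real (deg X k F0) * f F0 * f F0"
        using deg_pos[OF assms(1-3) F0(1)] F0(2) by (auto simp add: mult.assoc zero_less_mult_iff linorder_neq_iff)
      show "\<And>i. i \<in> faces X k \<Longrightarrow> 0 \<le> real (deg X k i) * f i * f i"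
        by (simp add: mult.assoc)
    qed
    moreover have "(1 + real k * lmin - real k) * inner_w X k f f \<le> ev * inner_w X k f f"
      "ev * inner_w X k f f \<le> (1 + real k * lmax - real k) * inner_w X k f f"
      using Q[of f] H Lf by auto
    ultimately show "1 + real k * lmin - real k \<le> ev" "ev \<le> 1 + real k * lmax - real k"
      by (auto simp: mult_le_cancel_right)
  qed
qed

end
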